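(* Let $\mathcal X$ be a Banach space, $a>0$, and let $(r_l)_{l\ge0},(r'_l)_{l\ge0}\subset[0,1)$ be sequences with $1-r_l\approx2^{-l}$, $1-r'_l\approx2^{-l}$ and $$(r'_l-r_l)\approx\Big(1-\frac{r_l}{r'_l}\Big)\approx(1-r_l)\approx2^{-l},\qquad l\ge0$$ (where $A_l\approx B_l$ means $c B_l\le A_l\le CB_l$ with constants independent of $l$). Then there is a constant $K$ such that $$f^*_{r_l,a}(\zeta_x)\le K\,f^*_{r'_l,a}(\zeta_x)$$ for all $f\in\mathcal A(\mathcal X)$, $l\ge0$ and $\zeta_x\in\mathbb T$.
   Context: $\mathbb D$ unit disc, $\mathbb T$ unit circle, $\zeta_x=e^{2\pi ix}$; $|\zeta_x-\zeta_y|$ arc-length distance (distance from $x-y$ to $\mathbb Z$). $\mathcal A(\mathcal X)$: analytic $f:\mathbb D\to\mathcal X$; $f_r(\zeta)=f(r\zeta)$. Peetre maximal function: $f^*_{r,a}(\zeta_x)=\sup_{\zeta_y\in\mathbb T}\|f_r(\zeta_y)\|_{\mathcal X}\big(1+\frac{|\zeta_x-\zeta_y|}{1-r}\big)^{-a}$ for $r\in[0,1)$. *)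

theory Defs
  imports "HOL-Analysis.Analysis"
begin

class complex_banach = banach +
  fixes scaleC :: "complex \<Rightarrow> 'a \<Rightarrow> 'a"
  assumes scaleC_add_right: "scaleC c (x + y) = scaleC c x + scaleC c y"
    and scaleC_add_left: "scaleC (b + c) x = scaleC b x + scaleC c x"
    and scaleC_scaleC: "scaleC b (scaleC c x) = scaleC (b * c) x"
    and scaleC_one: "scaleC 1 x = x"
    and scaleC_of_real: "scaleC (complex_of_real t) x = t *\<^sub>R x"
    and norm_scaleC: "norm (scaleC c x) = cmod c * norm x"

text \<open>f is analytic on the unit disc: complex differentiable at every point of the disc
(for Banach-space-valued functions this is equivalent to analyticity).\<close>
definition analytic_disc :: "(complex \<Rightarrow> 'a::complex_banach) \<Rightarrow> bool" where
  "analytic_disc f \<longleftrightarrow>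
     (\<forall>z \<in> ball 0 1. \<exists>v. ((\<lambda>w. scaleC (inverse (w - z)) (f w - f z)) \<longlongrightarrow> v) (at z))"

definition zeta :: "real \<Rightarrow> complex" where
  "zeta x = cis (2 * pi * x)"

text \<open>arc distance |zeta_x - zeta_y| := distance from x - y to the integers\<close>
definition circdist :: "real \<Rightarrow> real \<Rightarrow> real" where
  "circdist x y = (INF k\<in>(\<int>::real set). \<bar>x - y - k\<bar>)"

text \<open>Peetre maximal function f*_{r,a}(zeta_x); the supremum over zeta_y in T
is taken over y in [0,1).\<close>
definition peetre :: "(complex \<Rightarrow> 'a::complex_banach) \<Rightarrow> real \<Rightarrow> real \<Rightarrow> real \<Rightarrow> real" where
  "peetre f r a x =
     (SUP y\<in>{0..<1}. norm (f (complex_of_real r * zeta y)) * (1 + circdist x y / (1 - r)) powr (- a))"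

end

theory Submission
  imports Defs "HOL-Complex_Analysis.Complex_Analysis"
begin


definition goodG :: "'a::real_normed_vector \<Rightarrow> ('a \<times> real) set \<Rightarrow> bool" where
 "goodG v G \<longleftrightarrow> (\<forall>x a y b. (x,a)\<in>G \<longrightarrow> (y,b)\<in>G \<longrightarrow> (x+y, a+b)\<in>G)
    \<and> (\<forall>x a c. (x,a)\<in>G \<longrightarrow> (c *\<^sub>R x, c*a)\<in>G) \<and> (\<forall>x a. (x,a)\<in>G \<longrightarrow> a \<le> norm x)
    \<and> (v, norm v) \<in> G"

lemma goodG_add: "goodG v G \<Longrightarrow> (x,a)\<in>G \<Longrightarrow> (y,b)\<in>G \<Longrightarrow> (x+y, a+b)\<in>G"
  unfolding goodG_def by blast
lemma goodG_scale: "goodG v G \<Longrightarrow> (x,a)\<in>G \<Longrightarrow> (c *\<^sub>R x, c*a)\<in>G"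
  unfolding goodG_def by blast
lemma goodG_bound: "goodG v G \<Longrightarrow> (x,a)\<in>G \<Longrightarrow> a \<le> norm x"
  unfolding goodG_def by blast
lemma goodG_v: "goodG v G \<Longrightarrow> (v, norm v)\<in>G"
  unfolding goodG_def by blast

lemma goodG_fun:
  assumes "goodG v G" "(x,a)\<in>G" "(x,b)\<in>G" shows "a = b"
proof -
  have "(x + (-1) *\<^sub>R x, a + (-1)*b) \<in> G" "(x + (-1) *\<^sub>R x, b + (-1)*a) \<in> G"
    using assms by (blast intro: goodG_add goodG_scale)+
  hence "a - b \<le> 0" "b - a \<le> 0" using goodG_bound[OF assms(1)] by fastforce+
  thus ?thesis by simp
qed

lemma goodG_zero: "goodG v G \<Longrightarrow> (0,0) \<in> G"
  using goodG_scale[of v G v "norm v" 0] goodG_v[of v G] by simp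

lemma goodG_extend:
  assumes g: "goodG v M" and nw: "\<forall>a. (w,a) \<notin> M"
  shows "\<exists>M'. goodG v M' \<and> M \<subseteq> M' \<and> M' \<noteq> M"
proof -
  define S where "S = (\<lambda>(x,a). a - norm (x - w)) ` M"
  have z: "(0,0) \<in> M" using goodG_zero[OF g] .
  have ub: "s \<le> norm (y + w) - b" if "s \<in> S" "(y,b) \<in> M" for s y b
  proof -
    obtain x a where xa: "(x,a) \<in> M" "s = a - norm (x - w)" using \<open>s \<in> S\<close> unfolding S_def by auto
    have "(x+y, a+b) \<in> M" using g xa that by (blast intro: goodG_add goodG_scale goodG_v dest: goodG_bound)
    hence "a + b \<le> norm (x + y)" using g by (blast intro: goodG_add goodG_scale goodG_v dest: goodG_bound)
    also have "\<dots> \<le> norm (x - w) + norm (y + w)"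
    proof -
      have "x + y = (x - w) + (y + w)" by simp
      thus ?thesis using norm_triangle_ineq[of "x - w" "y + w"] by simp
    qed
    finally show ?thesis using xa by simp
  qed
  have Sne: "S \<noteq> {}" using z unfolding S_def by auto
  have Sbdd: "bdd_above S" using ub[OF _ z] by (auto intro!: bdd_aboveI[where M = "norm w"])
  define t where "t = Sup S"
  have t1: "a - norm (x - w) \<le> t" if "(x,a)\<in>M" for x a
    unfolding t_def using that Sbdd by (auto intro!: cSup_upper simp: S_def)
  have t2: "t \<le> norm (y + w) - b" if "(y,b)\<in>M" for y b
    unfolding t_def using that Sne ub by (auto intro!: cSup_least)
  define M' where "M' = {(x + c *\<^sub>R w, a + c * t) | x a c. (x,a) \<in> M}"
  have "goodG v M'"
    unfolding goodG_def
  proof (intro conjI allI impI)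
    fix x1 a1 x2 a2 assume "(x1,a1)\<in>M'" "(x2,a2)\<in>M'"
    then obtain y1 b1 c1 y2 b2 c2 where h: "(y1,b1)\<in>M" "(y2,b2)\<in>M" "x1 = y1 + c1 *\<^sub>R w" "a1 = b1 + c1 * t"
      "x2 = y2 + c2 *\<^sub>R w" "a2 = b2 + c2 * t" unfolding M'_def by blast
    have "(y1+y2, b1+b2) \<in> M" using g h by (blast intro: goodG_add goodG_scale goodG_v dest: goodG_bound)
    moreover have "x1 + x2 = (y1+y2) + (c1+c2) *\<^sub>R w" "a1 + a2 = (b1+b2) + (c1+c2)*t"
      using h by (simp_all add: algebra_simps)
    ultimately show "(x1+x2, a1+a2) \<in> M'" unfolding M'_def by blast
  next
    fix x1 a1 c assume "(x1,a1)\<in>M'"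
    then obtain y1 b1 c1 where h: "(y1,b1)\<in>M" "x1 = y1 + c1 *\<^sub>R w" "a1 = b1 + c1 * t"
      unfolding M'_def by blast
    have "(c *\<^sub>R y1, c*b1) \<in> M" using g h by (blast intro: goodG_add goodG_scale goodG_v dest: goodG_bound)
    moreover have "c *\<^sub>R x1 = c *\<^sub>R y1 + (c*c1) *\<^sub>R w" "c*a1 = c*b1 + (c*c1)*t"
      using h by (simp_all add: algebra_simps)
    ultimately show "(c *\<^sub>R x1, c*a1) \<in> M'" unfolding M'_def by blast
  next
    fix x1 a1 assume "(x1,a1)\<in>M'"
    then obtain y b c where h: "(y,b)\<in>M" "x1 = y + c *\<^sub>R w" "a1 = b + c * t"
      unfolding M'_def by blast
    show "a1 \<le> norm x1"
    proof (cases c "0::real" rule: linorder_cases)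
      case equal thus ?thesis using h goodG_bound[OF g] by auto
    next
      case greater
      have "((1/c) *\<^sub>R y, (1/c)*b) \<in> M" using g h by (blast intro: goodG_add goodG_scale goodG_v dest: goodG_bound)
      from t2[OF this] have "c * t \<le> c * (norm ((1/c) *\<^sub>R y + w) - (1/c)*b)"
        using greater by (simp add: mult_left_mono)
      hence A: "c * t \<le> c * norm ((1/c) *\<^sub>R y + w) - b"
        using greater by (simp add: right_diff_distrib)
      have "c * norm ((1/c) *\<^sub>R y + w) = norm (c *\<^sub>R ((1/c) *\<^sub>R y + w))"
        using greater by simp
      also have "c *\<^sub>R ((1/c) *\<^sub>R y + w) = y + c *\<^sub>R w" using greater by (simp add: scaleR_add_right)
      finally have "c * t \<le> norm (y + c *\<^sub>R w) - b" using A by simp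
      thus ?thesis using h by simp
    next
      case less
      define e where "e = - c"
      have e: "e > 0" using less e_def by simp
      have "((1/e) *\<^sub>R y, (1/e)*b) \<in> M" using g h by (blast intro: goodG_add goodG_scale goodG_v dest: goodG_bound)
      from t1[OF this] have "e * ((1/e)*b - norm ((1/e) *\<^sub>R y - w)) \<le> e * t"
        using e by (simp add: mult_left_mono)
      hence A: "b - e * norm ((1/e) *\<^sub>R y - w) \<le> e * t"
        using e by (simp add: right_diff_distrib)
      have "e * norm ((1/e) *\<^sub>R y - w) = norm (e *\<^sub>R ((1/e) *\<^sub>R y - w))"
        using e by simp
      also have "e *\<^sub>R ((1/e) *\<^sub>R y - w) = y + c *\<^sub>R w" using e by (simp add: scaleR_diff_right e_def)
      finally have "b - norm (y + c *\<^sub>R w) \<le> e * t" using A by simp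
      thus ?thesis using h e_def by simp
    qed
  next
    have "(v, norm v) \<in> M" using g by (blast intro: goodG_add goodG_scale goodG_v dest: goodG_bound)
    hence "(v + 0 *\<^sub>R w, norm v + 0 * t) \<in> M'" unfolding M'_def by blast
    thus "(v, norm v) \<in> M'" by simp
  qed
  moreover have "M \<subseteq> M'"
  proof
    fix p assume "p \<in> M" then obtain x a where "p = (x,a)" "(x,a)\<in>M" by (cases p) auto
    moreover have "(x + 0 *\<^sub>R w, a + 0 * t) \<in> M'" unfolding M'_def using \<open>(x,a)\<in>M\<close> by blast
    ultimately show "p \<in> M'" by simp
  qed
  moreover have "(w, t) \<in> M'"
  proof -
    have "(0 + 1 *\<^sub>R w, 0 + 1 * t) \<in> M'" unfolding M'_def using z by blast
    thus ?thesis by simp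
  qed
  hence "M' \<noteq> M" using nw by auto
  ultimately show ?thesis by blast
qed

lemma real_HB:
  fixes v :: "'a::real_normed_vector"
  shows "\<exists>g. (\<forall>x y. g (x+y) = g x + g y) \<and> (\<forall>c x. g (c *\<^sub>R x) = c * g x)
     \<and> (\<forall>x. g x \<le> norm x) \<and> g v = norm v"
proof -
  define A where "A = {G. goodG v G}"
  define G0 where "G0 = {(c *\<^sub>R v, c * norm v) | c. True}"
  have G0: "goodG v G0" unfolding goodG_def G0_def
  proof (intro conjI allI impI)
    fix x a y b assume "(x, a) \<in> {(c *\<^sub>R v, c * norm v) |c. True}" "(y, b) \<in> {(c *\<^sub>R v, c * norm v) |c. True}"
    then obtain c d where "x = c *\<^sub>R v" "a = c * norm v" "y = d *\<^sub>R v" "b = d * norm v" by blast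
    thus "(x + y, a + b) \<in> {(c *\<^sub>R v, c * norm v) |c. True}"
      by (auto intro!: exI[of _ "c+d"] simp: algebra_simps scaleR_add_left)
  next
    fix x a c assume "(x, a) \<in> {(c *\<^sub>R v, c * norm v) |c. True}"
    then obtain d where "x = d *\<^sub>R v" "a = d * norm v" by blast
    thus "(c *\<^sub>R x, c * a) \<in> {(c *\<^sub>R v, c * norm v) |c. True}"
      by (auto intro!: exI[of _ "c*d"])
  next
    fix x a assume "(x, a) \<in> {(c *\<^sub>R v, c * norm v) |c. True}"
    then obtain d where "x = d *\<^sub>R v" "a = d * norm v" by blast
    thus "a \<le> norm x" by (simp add: mult_right_mono)
  next
    show "(v, norm v) \<in> {(c *\<^sub>R v, c * norm v) |c. True}" by (auto intro!: exI[of _ 1])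
  qed
  have "\<forall>C\<in>chains A. \<exists>U\<in>A. \<forall>X\<in>C. X \<subseteq> U"
  proof
    fix C assume C: "C \<in> chains A"
    show "\<exists>U\<in>A. \<forall>X\<in>C. X \<subseteq> U"
    proof (cases "C = {}")
      case True thus ?thesis using G0 A_def by auto
    next
      case False
      have CA: "C \<subseteq> A" and ch: "\<forall>X\<in>C. \<forall>Y\<in>C. X \<subseteq> Y \<or> Y \<subseteq> X"
        using C unfolding chains_def chain_subset_def by auto
      have "goodG v (\<Union>C)" unfolding goodG_def
      proof (intro conjI allI impI)
        fix x a y b assume "(x,a) \<in> \<Union>C" "(y,b) \<in> \<Union>C"
        then obtain X Y where "X\<in>C" "Y\<in>C" "(x,a)\<in>X" "(y,b)\<in>Y" by blast
        moreover from ch this have "X \<subseteq> Y \<or> Y \<subseteq> X" by blast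
        ultimately obtain Z where "Z\<in>C" "(x,a)\<in>Z" "(y,b)\<in>Z" by blast
        moreover have "goodG v Z" using CA \<open>Z\<in>C\<close> A_def by auto
        ultimately show "(x+y,a+b) \<in> \<Union>C" by (blast intro: goodG_add goodG_scale goodG_v dest: goodG_bound)
      next
        fix x a c assume "(x,a) \<in> \<Union>C"
        then obtain Z where "Z\<in>C" "(x,a)\<in>Z" by blast
        moreover have "goodG v Z" using CA \<open>Z\<in>C\<close> A_def by auto
        ultimately show "(c *\<^sub>R x, c*a) \<in> \<Union>C" by (blast intro: goodG_add goodG_scale goodG_v dest: goodG_bound)
      next
        fix x a assume "(x,a) \<in> \<Union>C"
        then obtain Z where "Z\<in>C" "(x,a)\<in>Z" by blast
        moreover have "goodG v Z" using CA \<open>Z\<in>C\<close> A_def by auto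
        ultimately show "a \<le> norm x" by (blast intro: goodG_add goodG_scale goodG_v dest: goodG_bound)
      next
        obtain Z where "Z\<in>C" using False by blast
        moreover have "goodG v Z" using CA \<open>Z\<in>C\<close> A_def by auto
        ultimately show "(v, norm v) \<in> \<Union>C" by (blast intro: goodG_add goodG_scale goodG_v dest: goodG_bound)
      qed
      thus ?thesis using A_def by auto
    qed
  qed
  from Zorn_Lemma2[OF this] obtain M where M: "M \<in> A" "\<forall>X\<in>A. M \<subseteq> X \<longrightarrow> X = M" by blast
  have gM: "goodG v M" using M A_def by auto
  have tot: "\<forall>w. \<exists>a. (w,a) \<in> M"
  proof (rule ccontr)
    assume "\<not> ?thesis" then obtain w where "\<forall>a. (w,a)\<notin>M" by blast
    from goodG_extend[OF gM this] M A_def show False by auto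
  qed
  define g where "g w = (SOME a. (w,a) \<in> M)" for w
  have gin: "(w, g w) \<in> M" for w unfolding g_def using tot by (metis someI_ex)
  show ?thesis
  proof (intro exI[of _ g] conjI allI)
    fix x y
    have "(x+y, g x + g y) \<in> M" using gM gin by (blast intro: goodG_add goodG_scale goodG_v dest: goodG_bound)
    thus "g (x+y) = g x + g y" using goodG_fun[OF gM] gin by blast
  next
    fix c x
    have "(c *\<^sub>R x, c * g x) \<in> M" using gM gin by (blast intro: goodG_add goodG_scale goodG_v dest: goodG_bound)
    thus "g (c *\<^sub>R x) = c * g x" using goodG_fun[OF gM] gin by blast
  next
    fix x show "g x \<le> norm x" using gM gin by (blast intro: goodG_add goodG_scale goodG_v dest: goodG_bound)
  next
    show "g v = norm v" using gM gin goodG_fun[OF gM] by (blast intro: goodG_add goodG_scale goodG_v dest: goodG_bound)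
  qed
qed



lemma scaleC_scaleR: "scaleC c (r *\<^sub>R x) = r *\<^sub>R scaleC c (x::'a::complex_banach)"
  by (metis scaleC_of_real scaleC_scaleC mult.commute)

lemma scaleC_ii: "scaleC \<i> (scaleC \<i> x) = - (x::'a::complex_banach)"
proof -
  have "scaleC \<i> (scaleC \<i> x) = scaleC (complex_of_real (-1)) x" by (simp add: scaleC_scaleC)
  also have "\<dots> = - x" using scaleC_of_real[of "-1" x] by simp
  finally show ?thesis .
qed

lemma complex_HB:
  fixes v :: "'a::complex_banach"
  shows "\<exists>\<phi>. (\<forall>x y. \<phi> (x+y) = \<phi> x + \<phi> y) \<and> (\<forall>c x. \<phi> (scaleC c x) = c * \<phi> x)
     \<and> (\<forall>x. cmod (\<phi> x) \<le> norm x) \<and> \<phi> v = complex_of_real (norm v)"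
proof -
  obtain g where gadd: "\<And>x y. g (x+y) = g x + g y" and gsc: "\<And>c x. g (c *\<^sub>R x) = c * g x"
    and gn: "\<And>x. g x \<le> norm x" and gv: "g v = norm v"
    using real_HB[of v] by blast
  define \<phi> where "\<phi> x = Complex (g x) (- g (scaleC \<i> x))" for x
  have padd: "\<phi> (x+y) = \<phi> x + \<phi> y" for x y
    unfolding \<phi>_def by (simp add: gadd scaleC_add_right complex_eq_iff)
  have psc: "\<phi> (r *\<^sub>R x) = of_real r * \<phi> x" for r x
    unfolding \<phi>_def by (simp add: gsc scaleC_scaleR complex_eq_iff)
  have pii: "\<phi> (scaleC \<i> x) = \<i> * \<phi> x" for x
  proof -
    have "g (- x) = - g x" using gsc[of "-1" x] by simp
    thus ?thesis unfolding \<phi>_def by (simp add: scaleC_ii complex_eq_iff)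
  qed
  have pC: "\<phi> (scaleC c x) = c * \<phi> x" for c x
  proof -
    have c: "c = complex_of_real (Re c) + \<i> * complex_of_real (Im c)" by (simp add: complex_eq_iff)
    have "scaleC c x = Re c *\<^sub>R x + scaleC \<i> (Im c *\<^sub>R x)"
      by (subst c, simp only: scaleC_add_left scaleC_of_real flip: scaleC_scaleC)
    hence "\<phi> (scaleC c x) = of_real (Re c) * \<phi> x + \<i> * (of_real (Im c) * \<phi> x)"
      by (simp add: padd psc pii)
    also have "\<dots> = c * \<phi> x" by (subst (3) c) (simp add: algebra_simps)
    finally show ?thesis .
  qed
  have Re\<phi>: "Re (\<phi> x) = g x" for x unfolding \<phi>_def by simp
  have pn: "cmod (\<phi> x) \<le> norm x" for x
  proof (cases "\<phi> x = 0")
    case True thus ?thesis by simp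
  next
    case False
    define c where "c = cnj (\<phi> x) / complex_of_real (cmod (\<phi> x))"
    have cm: "cmod c = 1" using False unfolding c_def by (simp add: norm_divide)
    have cc: "cnj (\<phi> x) * \<phi> x = complex_of_real (cmod (\<phi> x)) * complex_of_real (cmod (\<phi> x))"
    proof -
      have "complex_of_real ((cmod (\<phi> x))^2) = \<phi> x * cnj (\<phi> x)" by (rule complex_norm_square)
      thus ?thesis by (simp only: power2_eq_square of_real_mult mult.commute)
    qed
    have "c * \<phi> x = complex_of_real (cmod (\<phi> x))" using False unfolding c_def
      by (simp add: cc)
    hence "cmod (\<phi> x) = Re (\<phi> (scaleC c x))" by (simp add: pC)
    also have "\<dots> \<le> norm (scaleC c x)" using Re\<phi> gn by simp
    also have "\<dots> = norm x" by (simp add: norm_scaleC cm)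
    finally show ?thesis .
  qed
  have "\<phi> v = complex_of_real (norm v)"
  proof -
    have "Re (\<phi> v) = norm v" using Re\<phi> gv by simp
    moreover have "cmod (\<phi> v) \<le> norm v" by (rule pn)
    ultimately have "(cmod (\<phi> v))^2 \<le> (Re (\<phi> v))^2" by (simp add: power_mono)
    hence "(Im (\<phi> v))^2 \<le> 0" by (simp add: cmod_power2)
    hence "Im (\<phi> v) = 0" by simp
      then show ?thesis using \<open>Re (\<phi> v) = norm v\<close> by (simp add: complex_eq_iff)
  qed
  thus ?thesis using padd pC pn by blast
qed



lemma circdist_eq: "circdist x y = \<bar>(x - y) - of_int (round (x - y))\<bar>"
  unfolding circdist_def
proof (rule antisym)
  show "(INF k\<in>\<int>. \<bar>x - y - k\<bar>) \<le> \<bar>x - y - of_int (round (x - y))\<bar>"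
    by (rule cINF_lower) (auto intro: bdd_belowI[of _ 0])
  show "\<bar>x - y - of_int (round (x - y))\<bar> \<le> (INF k\<in>\<int>. \<bar>x - y - k\<bar>)"
    by (rule cINF_greatest) (auto elim!: Ints_cases simp: round_diff_minimal)
qed

lemma circdist_nonneg: "circdist x y \<ge> 0" by (simp add: circdist_eq)

lemma round_half: "\<bar>s - of_int (round s)\<bar> \<le> (1/2::real)"
  using of_int_round_abs_le[of s] by (simp add: abs_minus_commute)

lemma norm_1_minus_sq:
  "cmod (1 - complex_of_real R * cis \<theta>)^2 = (1-R)^2 + 4 * R * (sin (\<theta>/2))^2"
proof -
  have "cmod (1 - complex_of_real R * cis \<theta>)^2 = (1 - R*cos \<theta>)^2 + (R * sin \<theta>)^2"
    by (simp add: cmod_power2)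
  also have "\<dots> = 1 - 2*R*cos \<theta> + R^2"
  proof -
    have h: "R^2*(sin \<theta>)^2 + R^2*(cos \<theta>)^2 = R^2"
      by (metis distrib_left mult_1_right sin_cos_squared_add)
    have "(R * sin \<theta>)^2 = R^2*(sin \<theta>)^2" "(R * cos \<theta>)^2 = R^2 * (cos \<theta>)^2"
      by (simp_all add: power_mult_distrib)
    hence e: "(R * sin \<theta>)^2 = R^2 - (R * cos \<theta>)^2" using h by linarith
    show ?thesis unfolding e by (simp add: power2_eq_square algebra_simps)
  qed
  also have "cos \<theta> = 1 - 2 * sin (\<theta>/2)^2" using cos_double_sin[of "\<theta>/2"] by simp
  finally show ?thesis by (simp add: power2_eq_square algebra_simps)
qed

lemma sin_lower: assumes "0 \<le> w" "w \<le> pi/2" shows "w/4 \<le> sin w"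
proof (cases "w \<le> pi/3")
  case True
  have "(\<lambda>u. sin u - u/2) 0 \<le> (\<lambda>u. sin u - u/2) w"
  proof (rule DERIV_nonneg_imp_nondecreasing[OF assms(1)])
    fix u assume u0: "0 \<le> u" and u1: "u \<le> w"
    note u = u0 u1
    have "cos (pi/3) \<le> cos u" using u True by (intro cos_monotone_0_pi_le) auto
    hence "cos u - 1/2 \<ge> 0" by (simp add: cos_60)
    moreover have "((\<lambda>u. sin u - u/2) has_real_derivative (cos u - 1/2)) (at u)"
      by (auto intro!: derivative_eq_intros)
    ultimately show "\<exists>y. ((\<lambda>u. sin u - u/2) has_real_derivative y) (at u) \<and> 0 \<le> y" by blast
  qed
  thus ?thesis using assms by simp
next
  case False
  have "sin (pi/3) \<le> sin w" using False assms by (intro sin_monotone_2pi_le) auto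
  hence a: "sqrt 3 / 2 \<le> sin w" by (simp add: sin_60)
  have b: "sqrt 3 \<ge> 1" by simp
  have c: "w < 2" using assms pi_less_4 by linarith
  from a b c show ?thesis by linarith
qed

lemma geo_upper:
  assumes "0 \<le> r" "r \<le> 1"
  shows "cmod (1 - complex_of_real r * cis (2*pi*u)) \<le> (1 - r) + 2*pi*\<bar>u\<bar>"
proof (rule power2_le_imp_le)
  have s: "sin (pi*u)^2 \<le> (pi*u)^2"
    using abs_sin_x_le_abs_x[of "pi*u"] by (metis abs_ge_zero power2_abs power_mono)
  have "cmod (1 - complex_of_real r * cis (2*pi*u))^2 = (1-r)^2 + 4 * r * (sin (pi*u))^2"
    using norm_1_minus_sq[of r "2*pi*u"] by simp
  also have "\<dots> \<le> (1-r)^2 + 4*(pi*u)^2"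
  proof -
    have "r * (sin (pi*u))^2 \<le> (sin (pi*u))^2" using assms by (simp add: mult_left_le_one_le)
    thus ?thesis using s by linarith
  qed
  also have "4*(pi*u)^2 = (2*pi*\<bar>u\<bar>)^2" by (simp add: power_mult_distrib)
  also have "(1-r)^2 + (2*pi*\<bar>u\<bar>)^2 \<le> ((1 - r) + 2*pi*\<bar>u\<bar>)^2"
    using assms by (simp add: power2_sum)
  finally show "cmod (1 - complex_of_real r * cis (2*pi*u))^2 \<le> ((1 - r) + 2*pi*\<bar>u\<bar>)^2" .
  show "0 \<le> (1 - r) + 2*pi*\<bar>u\<bar>" using assms by simp
qed

lemma geo_lower:
  assumes "\<bar>u\<bar> \<le> 1/2" "0 \<le> R" "R < 1"
  shows "((1-R) + \<bar>u\<bar>)/3 \<le> cmod (1 - complex_of_real R * cis (2*pi*u))"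
proof (rule power2_le_imp_le)
  have "pi*\<bar>u\<bar>/4 \<le> sin (pi*\<bar>u\<bar>)" using assms by (intro sin_lower) (auto simp: mult_le_cancel_left1)
  moreover have "\<bar>u\<bar>/2 \<le> pi*\<bar>u\<bar>/4" using pi_gt3 by (simp add: mult_right_mono)
  moreover have "\<bar>sin (pi*u)\<bar> = sin (pi*\<bar>u\<bar>)"
  proof -
    have "pi*\<bar>u\<bar> \<le> pi" using assms by (simp add: mult_left_le)
    hence sp: "0 \<le> sin (pi*\<bar>u\<bar>)" by (intro sin_ge_zero) auto
    show ?thesis
  proof (cases "u \<ge> 0")
    case True thus ?thesis using sp by simp
  next
    case False
    moreover have "sin (pi*\<bar>u\<bar>) = - sin (pi*u)" using False by simp
    thus ?thesis using sp by simp
  qed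
  qed
  ultimately have "\<bar>u\<bar>/2 \<le> \<bar>sin (pi*u)\<bar>" by linarith
  hence "(\<bar>u\<bar>/2)^2 \<le> \<bar>sin (pi*u)\<bar>^2" by (intro power_mono) auto
  hence s: "u^2/4 \<le> sin (pi*u)^2" by (simp add: power_divide)
  have "(1-R)^2 + R*u^2 \<le> (1-R)^2 + 4 * R * (sin (pi*u))^2"
  proof -
    have s4: "u^2 \<le> 4 * (sin (pi*u))^2" using s by simp
    have "R * u^2 \<le> R * (4 * (sin (pi*u))^2)" using mult_left_mono[OF s4, of R] assms by simp
    thus ?thesis by (simp add: mult.assoc mult.left_commute)
  qed
  also have "\<dots> = cmod (1 - complex_of_real R * cis (2*pi*u))^2"
    using norm_1_minus_sq[of R "2*pi*u"] by simp
  finally have X: "(1-R)^2 + R*u^2 \<le> cmod (1 - complex_of_real R * cis (2*pi*u))^2" .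
  have "(((1-R) + \<bar>u\<bar>)/3)^2 \<le> (1-R)^2 + R*u^2"
  proof (cases "R \<ge> 1/2")
    case True
    have "(((1-R) + \<bar>u\<bar>)/3)^2 \<le> (1-R)^2 + u^2/2"
    proof -
      define A where "A = 1 - R"
      define B where "B = \<bar>u\<bar>"
      have u2: "u^2 = B*B" unfolding B_def by (simp add: power2_eq_square abs_mult_self_eq)
      have h1: "0 \<le> (A-B)*(A-B)" by simp
      have h2: "0 \<le> A*A" "0 \<le> B*B" by simp_all
      have e1: "((A+B)/3)^2 = (A*A + 2*(A*B) + B*B)/9" by (simp add: power2_eq_square field_simps)
      have e2: "(A-B)*(A-B) = A*A - 2*(A*B) + B*B" by (simp add: algebra_simps)
      have e3: "A^2 + u^2/2 = A*A + (B*B)/2" using u2 by (simp add: power2_eq_square)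
      have k: "2*(A*B) \<le> A*A + B*B" using h1 e2 by linarith
      have l: "\<And>p q s::real. 2*q \<le> p + s \<Longrightarrow> 0 \<le> p \<Longrightarrow> 0 \<le> s \<Longrightarrow> (p + 2*q + s)/9 \<le> p + s/2"
        by (simp add: field_simps)
      have "((A+B)/3)^2 \<le> A^2 + u^2/2" unfolding e1 e3 using l[OF k h2] .
      thus ?thesis unfolding A_def B_def .
    qed
    also have "\<dots> \<le> (1-R)^2 + R*u^2"
    proof -
      have "(1/2)*u^2 \<le> R*u^2" using True by (intro mult_right_mono) auto
      thus ?thesis by simp
    qed
    finally show ?thesis .
  next
    case False
    have "((1-R) + \<bar>u\<bar>)/3 \<le> 1 - R" using False assms by simp
    hence "(((1-R) + \<bar>u\<bar>)/3)^2 \<le> (1-R)^2"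
      using assms by (intro power_mono) auto
    also have "\<dots> \<le> (1-R)^2 + R*u^2" using assms by simp
    finally show ?thesis .
  qed
  with X show "(((1-R) + \<bar>u\<bar>)/3)^2 \<le> cmod (1 - complex_of_real R * cis (2*pi*u))^2" by linarith
  show "0 \<le> cmod (1 - complex_of_real R * cis (2*pi*u))" by simp
qed

lemma zeta_shift:
  "cmod (1 - complex_of_real R * (cnj (zeta x) * zeta t)) =
   cmod (1 - complex_of_real R * cis (2*pi*((x-t) - of_int (round (x-t)))))"
proof -
  define k where "k = round (x - t)"
  have "cis (2*pi*((x-t) - of_int k)) = cis (2*pi*(x-t)) * cis (2*pi*(of_int (-k)))"
    by (simp add: cis_mult algebra_simps)
  also have "cis (2*pi*(of_int (-k))) = 1" by (intro cis_multiple_2pi) auto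
  finally have 1: "cis (2*pi*((x-t) - of_int k)) = cis (2*pi*(x-t))" by simp
  have 2: "cnj (zeta x) * zeta t = cnj (cis (2*pi*(x-t)))"
    by (simp add: zeta_def cis_cnj cis_mult algebra_simps)
  have 3: "1 - complex_of_real R * cnj (cis (2*pi*(x-t))) = cnj (1 - complex_of_real R * cis (2*pi*(x-t)))"
    by simp
  have "cmod (1 - complex_of_real R * (cnj (zeta x) * zeta t)) =
        cmod (1 - complex_of_real R * cnj (cis (2*pi*(x-t))))" by (simp only: 2)
  also have "\<dots> = cmod (1 - complex_of_real R * cis (2*pi*(x-t)))" by (simp only: 3 complex_mod_cnj)
  finally show ?thesis using 1 by (simp add: k_def)
qed

lemma circle_param:
  assumes "cmod z = R" shows "\<exists>t\<in>{0..<1}. z = complex_of_real R * zeta t"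
proof (cases "z = 0")
  case True thus ?thesis using assms by (auto intro!: bexI[of _ 0])
next
  case False
  have z: "z = complex_of_real R * cis (Arg z)"
    using assms False by (metis cis_Arg complex_of_real_def mult.commute sgn_eq rcis_def rcis_cmod_Arg)
  have A: "- pi < Arg z" "Arg z \<le> pi" using Arg_bounded by auto
  show ?thesis
  proof (cases "Arg z \<ge> 0")
    case True
    have "Arg z / (2*pi) < 1" using A pi_gt_zero by (simp add: field_simps)
    thus ?thesis using True z by (auto intro!: bexI[of _ "Arg z / (2*pi)"] simp: zeta_def)
  next
    case False
    have "cis (2*pi*(Arg z / (2*pi) + 1)) = cis (Arg z) * cis (2*pi*1)"
      by (simp add: cis_mult algebra_simps)
    hence c: "cis (2*pi*(Arg z / (2*pi) + 1)) = cis (Arg z)" by simp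
    have "0 \<le> Arg z / (2*pi) + 1" using A pi_gt_zero by (simp add: field_simps)
    moreover have "Arg z / (2*pi) + 1 < 1" using False pi_gt_zero by (simp add: field_simps)
    ultimately show ?thesis using z c by (auto intro!: bexI[of _ "Arg z / (2*pi) + 1"] simp: zeta_def)
  qed
qed



lemma analytic_cont:
  assumes "analytic_disc f" shows "continuous_on (ball 0 1) f"
proof -
  have "isCont f z" if z: "z \<in> ball 0 1" for z
  proof -
    obtain v where lim: "((\<lambda>w. scaleC (inverse (w - z)) (f w - f z)) \<longlongrightarrow> v) (at z)"
      using assms z unfolding analytic_disc_def by blast
    have ev: "eventually (\<lambda>w. norm (scaleC (inverse (w - z)) (f w - f z)) < norm v + 1) (at z)"
      using tendsto_norm[OF lim] by (rule order_tendstoD) simp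
    have ne: "eventually (\<lambda>w. w \<noteq> z) (at z)" by (simp add: eventually_at_filter)
    have "((\<lambda>w. f w - f z) \<longlongrightarrow> 0) (at z)"
    proof (rule Lim_null_comparison)
      show "eventually (\<lambda>w. norm (f w - f z) \<le> cmod (w - z) * (norm v + 1)) (at z)"
        using ev ne
      proof eventually_elim
        case (elim w)
        have "f w - f z = scaleC (w - z) (scaleC (inverse (w - z)) (f w - f z))"
          using elim by (simp add: scaleC_scaleC scaleC_one)
        hence "norm (f w - f z) = cmod (w - z) * norm (scaleC (inverse (w - z)) (f w - f z))"
          by (metis norm_scaleC)
        also have "\<dots> \<le> cmod (w - z) * (norm v + 1)"
          using elim by (intro mult_left_mono) auto
        finally show ?case .
      qed
      show "((\<lambda>w. cmod (w - z) * (norm v + 1)) \<longlongrightarrow> 0) (at z)"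
      proof -
        have "((\<lambda>w. cmod (w - z)) \<longlongrightarrow> cmod (z - z)) (at z)"
          by (intro tendsto_intros)
        hence "((\<lambda>w. cmod (w - z) * (norm v + 1)) \<longlongrightarrow> cmod (z - z) * (norm v + 1)) (at z)"
          by (intro tendsto_mult_right)
        thus ?thesis by simp
      qed
    qed
    thus "isCont f z" by (simp add: isCont_def LIM_zero_iff)
  qed
  thus ?thesis by (simp add: continuous_at_imp_continuous_on)
qed

lemma analytic_comp:
  fixes f :: "complex \<Rightarrow> 'a::complex_banach"
  assumes an: "analytic_disc f"
    and padd: "\<And>x y. \<phi> (x+y) = \<phi> x + \<phi> y" and psc: "\<And>c x. \<phi> (scaleC c x) = c * \<phi> x"
    and pn: "\<And>x. cmod (\<phi> x) \<le> norm x"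
  shows "(\<lambda>z. \<phi> (f z)) holomorphic_on ball 0 1"
proof -
  have lin: "bounded_linear \<phi>"
  proof (rule bounded_linear_intro[where K=1])
    show "\<phi> (x + y) = \<phi> x + \<phi> y" for x y by (rule padd)
    show "\<phi> (r *\<^sub>R x) = r *\<^sub>R \<phi> x" for r x
    proof -
      have "\<phi> (r *\<^sub>R x) = \<phi> (scaleC (complex_of_real r) x)" by (simp add: scaleC_of_real)
      thus ?thesis by (simp add: psc scaleR_conv_of_real)
    qed
    show "norm (\<phi> x) \<le> norm x * 1" for x using pn by simp
  qed
  have pdiff: "\<phi> (x - y) = \<phi> x - \<phi> y" for x y using linear_diff[OF bounded_linear.linear[OF lin]] .
  have "(\<lambda>z. \<phi> (f z)) field_differentiable (at z)" if z: "z \<in> ball 0 1" for z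
  proof -
    obtain v where lim: "((\<lambda>w. scaleC (inverse (w - z)) (f w - f z)) \<longlongrightarrow> v) (at z)"
      using an z unfolding analytic_disc_def by blast
    have "((\<lambda>w. \<phi> (scaleC (inverse (w - z)) (f w - f z))) \<longlongrightarrow> \<phi> v) (at z)"
      using bounded_linear.tendsto[OF lin lim] .
    moreover have "\<phi> (scaleC (inverse (w - z)) (f w - f z)) = (\<phi> (f w) - \<phi> (f z)) / (w - z)" for w
      by (simp add: psc pdiff divide_inverse mult.commute)
    ultimately have "((\<lambda>w. (\<phi> (f w) - \<phi> (f z)) / (w - z)) \<longlongrightarrow> \<phi> v) (at z)" by simp
    hence "((\<lambda>w. \<phi> (f w)) has_field_derivative \<phi> v) (at z)"
      by (simp add: has_field_derivative_iff)
    thus ?thesis unfolding field_differentiable_def by blast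
  qed
  thus ?thesis by (meson holomorphic_onI field_differentiable_at_within)
qed



lemma powr_inv_swap: "0 < b \<Longrightarrow> 0 < c \<Longrightarrow> (b/c) powr (-a) = (c/b) powr (a::real)"
proof -
  assume "0 < b" "0 < c"
  have "(c/b) powr a = inverse (b/c) powr a" by simp
  also have "\<dots> = inverse ((b/c) powr a)" by (rule inverse_powr)
  finally show ?thesis by (simp add: powr_minus)
qed

lemma powr_cancel: "0 < (X::real) \<Longrightarrow> X powr a * X powr (-a) = 1"
  by (simp flip: powr_add)

lemma peetre_ge:
  fixes f :: "complex \<Rightarrow> 'X::complex_banach"
  assumes an: "analytic_disc f" and R: "0 \<le> R" "R < 1" and a: "0 \<le> a" and t: "t \<in> {0..<1}"
  shows "norm (f (complex_of_real R * zeta t)) * (1 + circdist x t / (1 - R)) powr (- a) \<le> peetre f R a x"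
proof -
  have dR: "0 < 1 - R" using R by simp
  have cf: "continuous_on (ball 0 1) f" by (rule analytic_cont[OF an])
  have cR: "cball 0 R \<subseteq> ball 0 1" using R by (auto simp: subset_eq)
  have "compact (f ` cball 0 R)" by (intro compact_continuous_image continuous_on_subset[OF cf cR]) auto
  then obtain B0 where B0: "\<And>z. z \<in> cball 0 R \<Longrightarrow> norm (f z) \<le> B0"
    by (meson bounded_iff compact_imp_bounded imageI)
  define Sf where "Sf = (\<lambda>t. norm (f (complex_of_real R * zeta t)) * (1 + circdist x t / (1 - R)) powr (- a))"
  have wt: "(1 + circdist x s / (1 - R)) powr (- a) \<le> 1" for s
  proof -
    have "0 \<le> circdist x s / (1 - R)" using dR circdist_nonneg by simp
    hence "1 \<le> (1 + circdist x s / (1 - R)) powr a" using a by (intro ge_one_powr_ge_zero) auto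
    thus ?thesis by (simp add: powr_minus inverse_le_1_iff)
  qed
  have zin: "complex_of_real R * zeta s \<in> cball 0 R" for s
    using R by (simp add: zeta_def norm_mult)
  have "Sf s \<le> B0" for s
  proof -
    have "Sf s \<le> norm (f (complex_of_real R * zeta s)) * 1"
      unfolding Sf_def by (intro mult_left_mono wt) auto
    also have "\<dots> \<le> B0" using B0[OF zin] by simp
    finally show ?thesis .
  qed
  hence bdd: "bdd_above (Sf ` {0..<1})" by (auto intro!: bdd_aboveI)
  have "Sf t \<le> (SUP t\<in>{0..<1}. Sf t)" by (rule cSUP_upper[OF t bdd])
  thus ?thesis unfolding peetre_def Sf_def .
qed

lemma peetre_nonneg:
  fixes f :: "complex \<Rightarrow> 'X::complex_banach"
  assumes an: "analytic_disc f" and R: "0 \<le> R" "R < 1" and a: "0 \<le> a"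
  shows "0 \<le> peetre f R a x"
proof -
  have "norm (f (complex_of_real R * zeta 0)) * (1 + circdist x 0 / (1 - R)) powr (- a) \<le> peetre f R a x"
    by (rule peetre_ge[OF an R a]) simp
  moreover have "0 \<le> norm (f (complex_of_real R * zeta 0)) * (1 + circdist x 0 / (1 - R)) powr (- a)"
    by (intro mult_nonneg_nonneg) simp_all
  ultimately show ?thesis by linarith
qed

lemma key:
  fixes f :: "complex \<Rightarrow> 'X::complex_banach"
  assumes an: "analytic_disc f" and r0: "0 \<le> r" and rR: "r \<le> R" and R1: "R < 1" and a: "0 \<le> a"
    and y: "y \<in> {0..<1}"
  shows "norm (f (complex_of_real r * zeta y)) * (1 + circdist x y / (1 - r)) powr (- a)
          \<le> (6*pi*(1-r)/(1-R)) powr a * peetre f R a x"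
proof -
  have R0: "0 \<le> R" using r0 rR by linarith
  have dR: "0 < 1 - R" using R1 by simp
  have dr: "0 < 1 - r" using rR R1 by simp
  define P where "P = peetre f R a x"
  have P0: "0 \<le> P" unfolding P_def by (rule peetre_nonneg[OF an R0 R1 a])
  define p where "p = complex_of_real r * zeta y"
  obtain \<phi> where padd: "\<And>x y. \<phi> (x+y) = \<phi> x + \<phi> y" and psc: "\<And>c x. \<phi> (scaleC c x) = c * \<phi> x"
    and pn: "\<And>x. cmod (\<phi> x) \<le> norm x" and pv: "\<phi> (f p) = complex_of_real (norm (f p))"
    using complex_HB[of "f p"] by blast
  define h where "h z = \<phi> (f z)" for z
  have hol: "h holomorphic_on ball 0 1" unfolding h_def by (rule analytic_comp[OF an padd psc pn])
  define \<Phi> where "\<Phi> z = (1 - cnj (zeta x) * z) powr (- complex_of_real a)" for z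
  have Repos: "0 < Re (1 - cnj (zeta x) * z)" if "z \<in> ball 0 1" for z
  proof -
    have "Re (cnj (zeta x) * z) \<le> cmod (cnj (zeta x) * z)" by (rule complex_Re_le_cmod)
    also have "\<dots> = cmod z" by (simp add: norm_mult zeta_def)
    also have "\<dots> < 1" using that by simp
    finally show ?thesis by simp
  qed
  have npr: "1 - cnj (zeta x) * z \<notin> \<real>\<^sub>\<le>\<^sub>0" if "z \<in> ball 0 1" for z
    using Repos[OF that] by (auto simp: complex_nonpos_Reals_iff)
  have holG: "(\<lambda>z. h z * \<Phi> z) holomorphic_on ball 0 1"
    unfolding \<Phi>_def by (intro holomorphic_intros hol) (use npr in auto)
  have n\<Phi>: "cmod (\<Phi> z) = cmod (1 - cnj (zeta x) * z) powr (-a)" for z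
    unfolding \<Phi>_def by (simp add: norm_powr_real_powr')
  have bound: "cmod (h z * \<Phi> z) \<le> P * (3/(1-R)) powr a" if "z \<in> frontier (cball 0 R)" for z
  proof -
    have "cmod z = R" using that R0 by simp
    then obtain t where t: "t \<in> {0..<1}" "z = complex_of_real R * zeta t" using circle_param by blast
    define d where "d = circdist x t"
    define u where "u = (x - t) - of_int (round (x - t))"
    have du: "d = \<bar>u\<bar>" unfolding d_def u_def by (rule circdist_eq)
    define q where "q = 1 + d/(1-R)"
    have d0: "0 \<le> d" unfolding d_def by (rule circdist_nonneg)
    have q0: "0 < q" unfolding q_def using d0 dR by (simp add: add_pos_nonneg)
    have "cmod (1 - cnj (zeta x) * z) = cmod (1 - complex_of_real R * (cnj (zeta x) * zeta t))"
      using t by (simp add: algebra_simps)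
    also have "\<dots> = cmod (1 - complex_of_real R * cis (2*pi*u))" unfolding u_def by (rule zeta_shift)
    finally have E: "((1-R) + d)/3 \<le> cmod (1 - cnj (zeta x) * z)"
      using geo_lower[of u R] round_half[of "x - t"] R0 R1 du unfolding u_def by simp
    have Lpos: "0 < ((1-R) + d)/3" using dR d0 by simp
    have "cmod (\<Phi> z) \<le> (((1-R) + d)/3) powr (-a)"
      unfolding n\<Phi> using a by (intro powr_mono2'[OF _ Lpos E]) simp
    also have "((1-R) + d)/3 = ((1-R)/3) * q" unfolding q_def using dR by (simp add: field_simps)
    also have "(((1-R)/3) * q) powr (-a) = ((1-R)/3) powr (-a) * q powr (-a)"
      by (rule powr_mult)
    also have "((1-R)/3) powr (-a) = (3/(1-R)) powr a" using dR by (simp add: powr_inv_swap)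
    finally have \<Phi>b: "cmod (\<Phi> z) \<le> (3/(1-R)) powr a * q powr (-a)" .
    have fz: "norm (f z) * q powr (-a) \<le> P"
      unfolding P_def q_def d_def t(2) by (rule peetre_ge[OF an R0 R1 a t(1)])
    have "cmod (h z * \<Phi> z) = cmod (h z) * cmod (\<Phi> z)" by (simp add: norm_mult)
    also have "\<dots> \<le> norm (f z) * ((3/(1-R)) powr a * q powr (-a))"
      unfolding h_def by (intro mult_mono pn \<Phi>b) auto
    also have "\<dots> = (norm (f z) * q powr (-a)) * (3/(1-R)) powr a" by simp
    also have "\<dots> \<le> P * (3/(1-R)) powr a" by (intro mult_right_mono fz) simp
    finally show ?thesis .
  qed
  have pin: "p \<in> cball 0 R" using r0 rR by (simp add: p_def zeta_def norm_mult)
  have cR: "cball 0 R \<subseteq> ball 0 1" using R1 by (auto simp: subset_eq)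
  have mm: "cmod (h p * \<Phi> p) \<le> P * (3/(1-R)) powr a"
  proof -
    have h1: "(\<lambda>z. h z * \<Phi> z) holomorphic_on interior (cball 0 R)"
      using holG by (rule holomorphic_on_subset) (use cR in auto)
    have h2: "continuous_on (closure (cball 0 R)) (\<lambda>z. h z * \<Phi> z)"
      using holomorphic_on_imp_continuous_on[OF holG] by (rule continuous_on_subset) (use cR in auto)
    show ?thesis using maximum_modulus_frontier[OF h1 h2 bounded_cball bound pin] by simp
  qed
  define dy where "dy = circdist x y"
  define uy where "uy = (x - y) - of_int (round (x - y))"
  have duy: "dy = \<bar>uy\<bar>" unfolding dy_def uy_def by (rule circdist_eq)
  have dy0: "0 \<le> dy" unfolding dy_def by (rule circdist_nonneg)
  define Ep where "Ep = cmod (1 - cnj (zeta x) * p)"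
  have pb: "p \<in> ball 0 1" using pin cR by blast
  have Ep_pos: "0 < Ep" unfolding Ep_def using Repos[OF pb] by (metis complex_Re_le_cmod order.strict_trans2)
  have "Ep = cmod (1 - complex_of_real r * (cnj (zeta x) * zeta y))"
    unfolding Ep_def p_def by (simp add: algebra_simps)
  also have "\<dots> = cmod (1 - complex_of_real r * cis (2*pi*uy))" unfolding uy_def by (rule zeta_shift)
  also have "\<dots> \<le> (1 - r) + 2*pi*\<bar>uy\<bar>" using r0 rR R1 by (intro geo_upper) auto
  finally have Ep_le: "Ep \<le> (1 - r) + 2*pi*dy" using duy by simp
  define qy where "qy = 1 + dy/(1-r)"
  have qy0: "0 < qy" unfolding qy_def using dy0 dr by (simp add: add_pos_nonneg)
  have Ep_le2: "Ep \<le> (2*pi*(1-r)) * qy"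
  proof -
    have "(2*pi*(1-r)) * qy = 2*pi*(1-r) + 2*pi*dy" unfolding qy_def using dr by (simp add: field_simps)
    moreover have "1 - r \<le> 2*pi*(1-r)" using dr pi_gt3 by simp
    ultimately show ?thesis using Ep_le by linarith
  qed
  define M where "M = P * (3/(1-R)) powr a"
  define A where "A = norm (f p)"
  have A0: "0 \<le> A" unfolding A_def by simp
  have M0: "0 \<le> M" unfolding M_def using P0 by simp
  have 1: "A * Ep powr (-a) \<le> M"
  proof -
    have "cmod (h p * \<Phi> p) = A * Ep powr (-a)"
      unfolding A_def Ep_def by (simp add: norm_mult n\<Phi> h_def pv)
    thus ?thesis using mm M_def by simp
  qed
  have 2: "A \<le> M * Ep powr a"
  proof -
    have "A = (A * Ep powr (-a)) * Ep powr a" using powr_cancel[OF Ep_pos, of a] by (simp add: algebra_simps)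
    also have "\<dots> \<le> M * Ep powr a" by (intro mult_right_mono 1) simp
    finally show ?thesis .
  qed
  have 3: "Ep powr a \<le> (2*pi*(1-r)) powr a * qy powr a"
  proof -
    have "Ep powr a \<le> ((2*pi*(1-r)) * qy) powr a" using Ep_pos Ep_le2 a by (intro powr_mono2) auto
    also have "\<dots> = (2*pi*(1-r)) powr a * qy powr a" by (rule powr_mult)
    finally show ?thesis .
  qed
  have "A * qy powr (-a) \<le> (M * ((2*pi*(1-r)) powr a * qy powr a)) * qy powr (-a)"
    using 2 3 M0 by (intro mult_right_mono order_trans[OF 2] mult_left_mono 3) auto
  also have "\<dots> = M * (2*pi*(1-r)) powr a * (qy powr a * qy powr (-a))" by (simp add: algebra_simps)
  also have "\<dots> = M * (2*pi*(1-r)) powr a" using powr_cancel[OF qy0] by simp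
  also have "\<dots> = P * ((3/(1-R)) powr a * (2*pi*(1-r)) powr a)" unfolding M_def by simp
  also have "(3/(1-R)) powr a * (2*pi*(1-r)) powr a = (3/(1-R) * (2*pi*(1-r))) powr a"
    by (rule powr_mult[symmetric])
  also have "3/(1-R) * (2*pi*(1-r)) = 6*pi*(1-r)/(1-R)" by simp
  finally show ?thesis unfolding A_def qy_def dy_def p_def P_def by (simp add: mult.commute)
qed


theorem lemma14:
  fixes a :: real and r r' :: "nat \<Rightarrow> real"
  assumes "a > 0"
    and "\<And>l. 0 \<le> r l \<and> r l < 1" and "\<And>l. 0 \<le> r' l \<and> r' l < 1"
    and "\<exists>c C. 0 < c \<and> (\<forall>l. c * 2 powr (- real l) \<le> 1 - r l \<and> 1 - r l \<le> C * 2 powr (- real l))"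
    and "\<exists>c C. 0 < c \<and> (\<forall>l. c * 2 powr (- real l) \<le> 1 - r' l \<and> 1 - r' l \<le> C * 2 powr (- real l))"
    and "\<exists>c C. 0 < c \<and> (\<forall>l. c * 2 powr (- real l) \<le> r' l - r l \<and> r' l - r l \<le> C * 2 powr (- real l))"
    and "\<exists>c C. 0 < c \<and> (\<forall>l. c * 2 powr (- real l) \<le> 1 - r l / r' l \<and> 1 - r l / r' l \<le> C * 2 powr (- real l))"
  shows "\<exists>K. \<forall>(f :: complex \<Rightarrow> 'X::complex_banach). analytic_disc f \<longrightarrow>
           (\<forall>l x. peetre f (r l) a x \<le> K * peetre f (r' l) a x)"
proof -
  obtain c1 C1 where c1: "0 < c1" and h1: "\<forall>l. c1 * 2 powr (- real l) \<le> 1 - r l \<and> 1 - r l \<le> C1 * 2 powr (- real l)"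
    using assms(4) by blast
  obtain c2 C2 where c2: "0 < c2" and h2: "\<forall>l. c2 * 2 powr (- real l) \<le> 1 - r' l \<and> 1 - r' l \<le> C2 * 2 powr (- real l)"
    using assms(5) by blast
  obtain c3 C3 where c3: "0 < c3" and h3: "\<forall>l. c3 * 2 powr (- real l) \<le> r' l - r l \<and> r' l - r l \<le> C3 * 2 powr (- real l)"
    using assms(6) by blast
  have a0: "0 \<le> a" using assms(1) by simp
  define K where "K = (6*pi*(C1/c2)) powr a"
  show ?thesis
  proof (intro exI[of _ K] allI impI)
    fix f :: "complex \<Rightarrow> 'X" and l x
    assume an: "analytic_disc f"
    have rl: "0 \<le> r l" "r l < 1" using assms(2)[of l] by auto
    have rl': "0 \<le> r' l" "r' l < 1" using assms(3)[of l] by auto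
    have e: "0 < (2::real) powr (- real l)" by simp
    have rr: "r l \<le> r' l"
    proof -
      have "0 < c3 * 2 powr (- real l)" using c3 e by simp
      thus ?thesis using h3 by (smt (verit))
    qed
    have ratio: "(1 - r l)/(1 - r' l) \<le> C1/c2"
    proof -
      have u: "1 - r l \<le> C1 * 2 powr (- real l)" using h1 by blast
      have w: "c2 * 2 powr (- real l) \<le> 1 - r' l" using h2 by blast
      have "(1 - r l)/(1 - r' l) \<le> (C1 * 2 powr (- real l)) / (c2 * 2 powr (- real l))"
        by (rule frac_le) (use u w rl c2 e in auto)
      also have "\<dots> = C1/c2" using e by simp
      finally show ?thesis .
    qed
    have P0: "0 \<le> peetre f (r' l) a x" by (rule peetre_nonneg[OF an rl' a0])
    have mono: "(6*pi*(1 - r l)/(1 - r' l)) powr a \<le> K"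
    proof -
      have "6*pi*(1 - r l)/(1 - r' l) = 6*pi*((1 - r l)/(1 - r' l))" by simp
      also have "\<dots> \<le> 6*pi*(C1/c2)" using ratio by (intro mult_left_mono) auto
      finally have "6*pi*(1 - r l)/(1 - r' l) \<le> 6*pi*(C1/c2)" .
      moreover have "0 \<le> 6*pi*(1 - r l)/(1 - r' l)" using rl rl' by simp
      ultimately show ?thesis unfolding K_def using a0 by (intro powr_mono2) auto
    qed
    show "peetre f (r l) a x \<le> K * peetre f (r' l) a x"
      unfolding peetre_def[of f "r l" a x]
    proof (rule cSUP_least)
      show "{0..<1::real} \<noteq> {}" by simp
      fix y :: real assume y: "y \<in> {0..<1}"
      have "norm (f (complex_of_real (r l) * zeta y)) * (1 + circdist x y / (1 - r l)) powr (- a)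
          \<le> (6*pi*(1 - r l)/(1 - r' l)) powr a * peetre f (r' l) a x"
        by (rule key[OF an rl(1) rr rl'(2) a0 y])
      also have "\<dots> \<le> K * peetre f (r' l) a x" by (intro mult_right_mono mono P0)
      finally show "norm (f (complex_of_real (r l) * zeta y)) * (1 + circdist x y / (1 - r l)) powr (- a)
          \<le> K * peetre f (r' l) a x" .
    qed
  qed
qed

end
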